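(* Let $N\ge1$, $n\ge k\ge 0$ be integers, let $T^{(g)}[1]>T^{(g)}[2]>\dots>T^{(g)}[L]$ be nonnegative integers, and let $k^{\mathrm{con}}[1],\dots,k^{\mathrm{con}}[L]$ be nonnegative integers. Suppose $$k\le n-nN\,\frac{1-\sum_{\ell=1}^{j-1}\frac{k^{\mathrm{con}}[\ell]}{n}}{T^{(g)}[j]+1}\quad\text{for all }j\in\{1,\dots,L\},\qquad k\le\sum_{\ell=1}^{L}k^{\mathrm{con}}[\ell].$$ Then there exists an $(n,k,\mathbf{T})_{\mathbb{F}}$ point-to-point code (over some finite field $\mathbb{F}$) achieving its delay spectrum $\mathbf{T}$ under $N$ erasures, where every entry of $\mathbf{T}$ lies in $\{T^{(g)}[1],\dots,T^{(g)}[L]\}$ and, for each $j$, at most $k^{\mathrm{con}}[j]$ entries of $\mathbf{T}$ equal $T^{(g)}[j]$.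
   Context: An $(n,k,\mathbf{T})_{\mathbb{F}}$ point-to-point code with delay spectrum $\mathbf{T}=[T[1],\dots,T[k]]$ (nonnegative integers) consists of source messages $s_t\in\mathbb{F}^k$, $t\ge0$; an encoder producing at each time $t$ a packet $x_t\in\mathbb{F}^n$ as a fixed function of $s_0,\dots,s_t$; and, for each $j$, a decoder which at time $t+T[j]$ outputs an estimate of $s_t[j]$ from received packets $y_0,\dots,y_{t+T[j]}$, where $y_u=x_u$ if time $u$ is not erased and $y_u=*$ otherwise. The code achieves delay spectrum $\mathbf{T}$ under $N$ erasures if for every erasure pattern with exactly $N$ erased times, every message sequence, every $t$ and $j$, the estimate of $s_t[j]$ is correct. *)

theory Defs
  imports Complex_Main "HOL-Algebra.Ring"
begin

text \<open>A source message s_t in F^k is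
represented by s t :: nat => 'a, with components s t j for j in {1..k} (1-based as in the paper).
A packet x_t in F^n is a function nat => 'a with meaningful components i in {1..n}.
A received packet is an option: None is the erasure symbol *, Some x is an unerased packet.
The delay spectrum T is indexed 1..k.\<close>

definition msg_agree :: "nat \<Rightarrow> nat \<Rightarrow> (nat \<Rightarrow> nat \<Rightarrow> 'a) \<Rightarrow> (nat \<Rightarrow> nat \<Rightarrow> 'a) \<Rightarrow> bool" where
  "msg_agree k t s s' \<longleftrightarrow> (\<forall>u\<le>t. \<forall>j\<in>{1..k}. s u j = s' u j)"

definition rcv_agree :: "nat \<Rightarrow> nat \<Rightarrow> (nat \<Rightarrow> (nat \<Rightarrow> 'a) option) \<Rightarrow> (nat \<Rightarrow> (nat \<Rightarrow> 'a) option) \<Rightarrow> bool" where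
  "rcv_agree n m y y' \<longleftrightarrow> (\<forall>u\<le>m. (y u = None \<longleftrightarrow> y' u = None) \<and>
      (\<forall>a b. y u = Some a \<longrightarrow> y' u = Some b \<longrightarrow> (\<forall>i\<in>{1..n}. a i = b i)))"

definition received :: "(nat \<Rightarrow> (nat \<Rightarrow> nat \<Rightarrow> 'a) \<Rightarrow> (nat \<Rightarrow> 'a)) \<Rightarrow> (nat \<Rightarrow> nat \<Rightarrow> 'a) \<Rightarrow> nat set \<Rightarrow> nat \<Rightarrow> (nat \<Rightarrow> 'a) option" where
  "received enc s E u = (if u \<in> E then None else Some (enc u s))"

text \<open>An (n,k,T)_F point-to-point code over the symbol set F (carrier of the field):
encoder enc t (a function of s_0..s_t, with values in F^n) and decoders dec j t
(decoder j at time t + T j, a function of y_0..y_{t+T j}).\<close>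
definition is_p2p_code ::
  "'a set \<Rightarrow> nat \<Rightarrow> nat \<Rightarrow> (nat \<Rightarrow> nat) \<Rightarrow> (nat \<Rightarrow> (nat \<Rightarrow> nat \<Rightarrow> 'a) \<Rightarrow> (nat \<Rightarrow> 'a))
   \<Rightarrow> (nat \<Rightarrow> nat \<Rightarrow> (nat \<Rightarrow> (nat \<Rightarrow> 'a) option) \<Rightarrow> 'a) \<Rightarrow> bool" where
  "is_p2p_code F n k T enc dec \<longleftrightarrow>
     (\<forall>t s. (\<forall>u j. j \<in> {1..k} \<longrightarrow> s u j \<in> F) \<longrightarrow> (\<forall>i\<in>{1..n}. enc t s i \<in> F)) \<and>
     (\<forall>t s s'. msg_agree k t s s' \<longrightarrow> (\<forall>i\<in>{1..n}. enc t s i = enc t s' i)) \<and>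
     (\<forall>j\<in>{1..k}. \<forall>t y y'. rcv_agree n (t + T j) y y' \<longrightarrow> dec j t y = dec j t y')"

definition achieves_spectrum ::
  "'a set \<Rightarrow> nat \<Rightarrow> nat \<Rightarrow> (nat \<Rightarrow> nat) \<Rightarrow> nat \<Rightarrow> (nat \<Rightarrow> (nat \<Rightarrow> nat \<Rightarrow> 'a) \<Rightarrow> (nat \<Rightarrow> 'a))
   \<Rightarrow> (nat \<Rightarrow> nat \<Rightarrow> (nat \<Rightarrow> (nat \<Rightarrow> 'a) option) \<Rightarrow> 'a) \<Rightarrow> bool" where
  "achieves_spectrum F n k T N enc dec \<longleftrightarrow>
     (\<forall>E s t j. finite E \<longrightarrow> card E = N \<longrightarrow> (\<forall>u j'. j' \<in> {1..k} \<longrightarrow> s u j' \<in> F) \<longrightarrow> j \<in> {1..k} \<longrightarrow>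
        dec j t (received enc s E) = s t j)"

end

theory Submission
  imports Defs "HOL-Number_Theory.Cong" "HOL-Computational_Algebra.Polynomial"
begin

definition Zp :: "nat \<Rightarrow> nat ring" where
  "Zp p = \<lparr>carrier = {..<p}, monoid.mult = (\<lambda>x y. x*y mod p), one = 1, zero = 0,
     add = (\<lambda>x y. (x+y) mod p)\<rparr>"

lemma Zp_field:
  assumes p: "prime p"
  shows "field (Zp p)"
proof -
  have p1: "p > 1" using p prime_gt_1_nat by blast
  have ag: "abelian_group (Zp p)"
  proof (rule abelian_groupI)
    fix x y z assume x: "x \<in> carrier (Zp p)" and y: "y \<in> carrier (Zp p)" and z: "z \<in> carrier (Zp p)"
    show "x \<oplus>\<^bsub>Zp p\<^esub> y \<in> carrier (Zp p)" using p1 by (simp add: Zp_def)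
    show "(x \<oplus>\<^bsub>Zp p\<^esub> y) \<oplus>\<^bsub>Zp p\<^esub> z = x \<oplus>\<^bsub>Zp p\<^esub> (y \<oplus>\<^bsub>Zp p\<^esub> z)"
      by (simp add: Zp_def) (metis add.assoc mod_add_left_eq mod_add_right_eq)
    show "x \<oplus>\<^bsub>Zp p\<^esub> y = y \<oplus>\<^bsub>Zp p\<^esub> x" by (simp add: Zp_def add.commute)
    show "\<zero>\<^bsub>Zp p\<^esub> \<oplus>\<^bsub>Zp p\<^esub> x = x" using x by (simp add: Zp_def)
    show "\<exists>y\<in>carrier (Zp p). y \<oplus>\<^bsub>Zp p\<^esub> x = \<zero>\<^bsub>Zp p\<^esub>"
    proof (cases "x = 0")
      case True then show ?thesis using p1 by (intro bexI[of _ 0]) (auto simp: Zp_def)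
    next
      case False then show ?thesis using x by (intro bexI[of _ "p - x"]) (auto simp: Zp_def)
    qed
  next
    show "\<zero>\<^bsub>Zp p\<^esub> \<in> carrier (Zp p)" using p1 by (simp add: Zp_def)
  qed
  have cm: "comm_monoid (Zp p)"
  proof (rule comm_monoidI)
    fix x y z assume x: "x \<in> carrier (Zp p)" and y: "y \<in> carrier (Zp p)" and z: "z \<in> carrier (Zp p)"
    show "x \<otimes>\<^bsub>Zp p\<^esub> y \<in> carrier (Zp p)" using p1 by (simp add: Zp_def)
    show "(x \<otimes>\<^bsub>Zp p\<^esub> y) \<otimes>\<^bsub>Zp p\<^esub> z = x \<otimes>\<^bsub>Zp p\<^esub> (y \<otimes>\<^bsub>Zp p\<^esub> z)"
      by (simp add: Zp_def) (metis mod_mult_left_eq mod_mult_right_eq mult.assoc)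
    show "x \<otimes>\<^bsub>Zp p\<^esub> y = y \<otimes>\<^bsub>Zp p\<^esub> x" by (simp add: Zp_def mult.commute)
    show "\<one>\<^bsub>Zp p\<^esub> \<otimes>\<^bsub>Zp p\<^esub> x = x" using x by (simp add: Zp_def)
  next
    show "\<one>\<^bsub>Zp p\<^esub> \<in> carrier (Zp p)" using p1 by (simp add: Zp_def)
  qed
  have cr: "cring (Zp p)"
  proof (rule cringI[OF ag cm])
    fix x y z assume "x \<in> carrier (Zp p)" "y \<in> carrier (Zp p)" "z \<in> carrier (Zp p)"
    show "(x \<oplus>\<^bsub>Zp p\<^esub> y) \<otimes>\<^bsub>Zp p\<^esub> z = x \<otimes>\<^bsub>Zp p\<^esub> z \<oplus>\<^bsub>Zp p\<^esub> y \<otimes>\<^bsub>Zp p\<^esub> z"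
      by (simp add: Zp_def) (metis add_mult_distrib mod_add_eq mod_mult_left_eq)
  qed
  show ?thesis
  proof (rule cring.cring_fieldI2[OF cr])
    show "\<zero>\<^bsub>Zp p\<^esub> \<noteq> \<one>\<^bsub>Zp p\<^esub>" by (simp add: Zp_def)
    fix a assume a: "a \<in> carrier (Zp p)" "a \<noteq> \<zero>\<^bsub>Zp p\<^esub>"
    then have a': "0 < a" "a < p" by (auto simp: Zp_def)
    have "coprime a p"
      using a' p by (metis coprime_commute nat_dvd_not_less prime_imp_coprime_nat)
    then obtain x where "[a * x = Suc 0] (mod p)" using cong_solve_coprime_nat by blast
    then have "a * (x mod p) mod p = 1" using p1
      by (metis One_nat_def cong_def mod_less mod_mult_right_eq)
    then show "\<exists>b\<in>carrier (Zp p). a \<otimes>\<^bsub>Zp p\<^esub> b = \<one>\<^bsub>Zp p\<^esub>"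
      using p1 by (intro bexI[of _ "x mod p"]) (auto simp: Zp_def)
  qed
qed

lemma roots_dvd_coeffs:
  fixes p :: int
  assumes "prime p"
  shows "finite S \<Longrightarrow> S \<subseteq> {0..<p} \<Longrightarrow> (\<forall>x\<in>S. p dvd poly f x) \<Longrightarrow> degree f < card S
     \<Longrightarrow> p dvd coeff f i"
proof (induction "card S" arbitrary: S f i)
  case 0
  then show ?case by simp
next
  case (Suc m)
  show ?case
  proof (cases "degree f = 0")
    case True
    then obtain c where f: "f = [:c:]" by (meson degree_eq_zeroE)
    obtain a where a: "a \<in> S" using Suc.hyps(2) by (metis card.empty ex_in_conv nat.distinct(1))
    have "p dvd c" using Suc.prems(3) a f by auto
    then show ?thesis using f by (cases i) auto
  next
    case False
    obtain a where a: "a \<in> S" using Suc.hyps(2) by (metis card.empty ex_in_conv nat.distinct(1))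
    define g where "g = synthetic_div f a"
    define S' where "S' = S - {a}"
    have cS': "m = card S'" using Suc.hyps(2) Suc.prems(1) a unfolding S'_def by simp
    have fg: "f = [:-a, 1:] * g + [:poly f a:]" unfolding g_def using synthetic_div_correct'[of a f] by simp
    have dg: "degree g < card S'" using False Suc.prems(4) cS' Suc.hyps(2) unfolding g_def
      by (simp add: degree_synthetic_div)
    have pa: "p dvd poly f a" using Suc.prems(3) a by auto
    have rg: "\<forall>x\<in>S'. p dvd poly g x"
    proof
      fix x assume x: "x \<in> S'"
      have "poly f x = (x - a) * poly g x + poly f a"
        by (subst fg) (simp add: algebra_simps)
      then have "p dvd (x - a) * poly g x"
        using Suc.prems(3) x pa unfolding S'_def by (metis DiffD1 dvd_add_left_iff)
      moreover have "\<not> p dvd (x - a)"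
      proof
        assume d: "p dvd (x - a)"
        have "x \<noteq> a" "x \<in> {0..<p}" "a \<in> {0..<p}" using x a Suc.prems(2) unfolding S'_def by auto
        then have "\<bar>x - a\<bar> < p" "x - a \<noteq> 0" by auto
        moreover have "\<bar>p\<bar> \<le> \<bar>x - a\<bar>" using d \<open>x - a \<noteq> 0\<close> by (simp add: dvd_imp_le_int) ultimately show False by simp
      qed
      ultimately show "p dvd poly g x" using assms by (meson prime_dvd_mult_iff)
    qed
    have IH: "\<And>j. p dvd coeff g j"
      using Suc.hyps(1)[OF cS' _ _ rg dg] Suc.prems(1,2) unfolding S'_def by auto
    have "coeff f i = coeff ([:-a, 1:] * g) i + coeff [:poly f a:] i"
      by (subst fg) simp
    also have "coeff ([:-a, 1:] * g) i = - a * coeff g i + coeff (pCons 0 g) i"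
      by (simp add: mult_pCons_left)
    finally have eq: "coeff f i = - a * coeff g i + coeff (pCons 0 g) i + coeff [:poly f a:] i" .
    have "p dvd coeff (pCons 0 g) i" using IH by (cases i) auto
    moreover have "p dvd coeff [:poly f a:] i" using pa by (cases i) auto
    ultimately show ?thesis unfolding eq using IH by (simp add: dvd_add)
  qed
qed

definition rsval :: "nat \<Rightarrow> nat \<Rightarrow> (nat \<Rightarrow> nat) \<Rightarrow> nat \<Rightarrow> nat" where
  "rsval p K c d = (\<Sum>i<K. c i * d ^ i) mod p"

lemma rs_inj:
  assumes p: "prime p" and c: "\<forall>i<K. c i < p" and c': "\<forall>i<K. c' i < p"
    and S: "finite S" "S \<subseteq> {..<p}" "K \<le> card S"
    and eq: "\<forall>d\<in>S. rsval p K c d = rsval p K c' d" and i: "i < K"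
  shows "c i = c' i"
proof -
  obtain S' where S': "S' \<subseteq> S" "card S' = K" using S(3) by (meson obtain_subset_with_card_n)
  have fS': "finite S'" using S' S(1) finite_subset by blast
  define f :: "int poly" where "f = (\<Sum>i<K. monom (int (c i) - int (c' i)) i)"
  have cf: "coeff f j = (if j < K then int (c j) - int (c' j) else 0)" for j
    unfolding f_def by (simp add: coeff_sum coeff_monom)
  have pf: "poly f x = (\<Sum>i<K. (int (c i) - int (c' i)) * x ^ i)" for x
    unfolding f_def by (simp add: poly_sum poly_monom)
  have degf: "degree f < card S'"
  proof -
    have "degree f \<le> K - 1"
      by (rule degree_le) (auto simp: cf)
    then show ?thesis using S' i by linarith
  qed
  have pint: "prime (int p)" using p by simp
  have roots: "\<forall>x\<in>int ` S'. int p dvd poly f x"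
  proof
    fix x assume "x \<in> int ` S'"
    then obtain d where d: "d \<in> S" "x = int d" using S' by auto
    have "(\<Sum>i<K. c i * d ^ i) mod p = (\<Sum>i<K. c' i * d ^ i) mod p"
      using eq d unfolding rsval_def by auto
    then have "[int (\<Sum>i<K. c i * d ^ i) = int (\<Sum>i<K. c' i * d ^ i)] (mod int p)"
      by (metis cong_def cong_int_iff)
    then have "int p dvd int (\<Sum>i<K. c i * d ^ i) - int (\<Sum>i<K. c' i * d ^ i)"
      by (simp add: cong_iff_dvd_diff)
    moreover have "int (\<Sum>i<K. c i * d ^ i) - int (\<Sum>i<K. c' i * d ^ i) = poly f x"
      unfolding pf d(2) by (simp add: sum_subtractf algebra_simps)
    ultimately show "int p dvd poly f x" by simp
  qed
  have sub: "int ` S' \<subseteq> {0..<int p}" using S' S(2) by auto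
  have cardI: "card (int ` S') = card S'" by (simp add: card_image)
  have "int p dvd coeff f i"
    using roots_dvd_coeffs[OF pint, of "int ` S'" f i] fS' sub roots degf cardI by simp
  then have "int p dvd int (c i) - int (c' i)" using cf i by simp
  moreover have "\<bar>int (c i) - int (c' i)\<bar> < int p" proof -
    have "c i < p" "c' i < p" using c c' i by auto
    then show ?thesis by (simp add: abs_less_iff)
  qed
  ultimately show ?thesis
    by (metis abs_0_eq diff_0_right dvd_imp_le_int eq_iff_diff_eq_0 not_less of_nat_eq_iff abs_of_nat)
qed

definition rsA :: "nat \<Rightarrow> nat \<Rightarrow> (nat \<Rightarrow> nat) set" where
  "rsA p K = Pi\<^sub>E {..<K} (\<lambda>_. {..<p})"

lemma rs_surj:
  assumes p: "prime p" and K: "K \<le> p"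
  shows "\<exists>c\<in>rsA p K. \<forall>d<K. rsval p K c d = info d mod p"
proof -
  have p0: "0 < p" using p prime_gt_0_nat by blast
  define \<Phi> where "\<Phi> c = restrict (rsval p K c) {..<K}" for c
  have fin: "finite (rsA p K)" unfolding rsA_def by (simp add: finite_PiE)
  have sub: "\<Phi> ` rsA p K \<subseteq> rsA p K"
  proof
    fix x assume "x \<in> \<Phi> ` rsA p K"
    then obtain c where "x = \<Phi> c" by blast
    then show "x \<in> rsA p K" unfolding \<Phi>_def rsA_def rsval_def using p0 by (simp add: PiE_iff)
  qed
  have inj: "inj_on \<Phi> (rsA p K)"
  proof (rule inj_onI)
    fix c c' assume c: "c \<in> rsA p K" and c': "c' \<in> rsA p K" and e: "\<Phi> c = \<Phi> c'"
    show "c = c'"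
    proof (rule ext)
      fix i
      show "c i = c' i"
      proof (cases "i < K")
        case True
        have "\<forall>d\<in>{..<K}. rsval p K c d = rsval p K c' d"
          using e unfolding \<Phi>_def by (metis restrict_apply')
        then show ?thesis
          using rs_inj[OF p, of K c c' "{..<K}" i] c c' K True unfolding rsA_def by (simp add: PiE_iff)
      next
        case False
        then show ?thesis using c c' unfolding rsA_def by (metis PiE_arb lessThan_iff)
      qed
    qed
  qed
  have "\<Phi> ` rsA p K = rsA p K" using endo_inj_surj[OF fin sub inj] .
  moreover have "restrict (\<lambda>d. info d mod p) {..<K} \<in> rsA p K"
    unfolding rsA_def using p0 by (simp add: PiE_iff)
  ultimately obtain c where "c \<in> rsA p K" "\<Phi> c = restrict (\<lambda>d. info d mod p) {..<K}"
    by (metis imageE)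
  then show ?thesis unfolding \<Phi>_def by (metis lessThan_iff restrict_apply')
qed

definition rs_coef :: "nat \<Rightarrow> nat \<Rightarrow> (nat \<Rightarrow> nat) \<Rightarrow> nat \<Rightarrow> nat" where
  "rs_coef p K info = (SOME c. c \<in> rsA p K \<and> (\<forall>d<K. rsval p K c d = info d mod p))"

definition rs_enc :: "nat \<Rightarrow> nat \<Rightarrow> (nat \<Rightarrow> nat) \<Rightarrow> nat \<Rightarrow> nat" where
  "rs_enc p K info = rsval p K (rs_coef p K info)"

lemma rs_coef:
  assumes "prime p" "K \<le> p"
  shows "rs_coef p K info \<in> rsA p K \<and> (\<forall>d<K. rsval p K (rs_coef p K info) d = info d mod p)"
proof -
  have "\<exists>c. c \<in> rsA p K \<and> (\<forall>d<K. rsval p K c d = info d mod p)"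
    using rs_surj[OF assms, of info] by blast
  from someI_ex[OF this] show ?thesis unfolding rs_coef_def .
qed

lemma rs_sys:
  assumes "prime p" "K \<le> p" "d < K"
  shows "rs_enc p K info d = info d mod p"
  using rs_coef[OF assms(1,2)] assms(3) unfolding rs_enc_def by blast

lemma rs_lt:
  assumes "prime p"
  shows "rs_enc p K info d < p"
  using assms prime_gt_0_nat unfolding rs_enc_def rsval_def by auto

lemma rs_mds:
  assumes p: "prime p" and W: "W \<le> p" and S: "finite S" "S \<subseteq> {..<W}" "K \<le> card S"
    and eq: "\<forall>d\<in>S. rs_enc p K info d = rs_enc p K info' d" and d: "d < K"
  shows "info d mod p = info' d mod p"
proof -
  have KW: "K \<le> W" using S card_mono[OF _ S(2)] by simp
  have Kp: "K \<le> p" using KW W by simp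
  note c = rs_coef[OF p Kp, of info] and c' = rs_coef[OF p Kp, of info']
  have "\<forall>i<K. rs_coef p K info i = rs_coef p K info' i"
  proof (intro allI impI)
    fix i assume i: "i < K"
    show "rs_coef p K info i = rs_coef p K info' i"
    proof (rule rs_inj[OF p _ _ S(1) _ S(3) _ i])
      show "\<forall>i<K. rs_coef p K info i < p" using c unfolding rsA_def by (simp add: PiE_iff)
      show "\<forall>i<K. rs_coef p K info' i < p" using c' unfolding rsA_def by (simp add: PiE_iff)
      show "S \<subseteq> {..<p}" using S(2) W by auto
      show "\<forall>d\<in>S. rsval p K (rs_coef p K info) d = rsval p K (rs_coef p K info') d"
        using eq unfolding rs_enc_def .
    qed
  qed
  then have "rsval p K (rs_coef p K info) d = rsval p K (rs_coef p K info') d"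
    unfolding rsval_def by simp
  then show ?thesis using c c' d by auto
qed


lemma int_le_div_iff:
  fixes a b c :: int
  assumes b: "0 < b"
  shows "c \<le> a div b \<longleftrightarrow> c * b \<le> a"
proof
  assume "c \<le> a div b"
  then have "c * b \<le> (a div b) * b" using b by (simp add: mult_right_mono)
  also have "\<dots> \<le> a" using b by (metis div_mult_mod_eq le_add_same_cancel1 pos_mod_sign)
  finally show "c * b \<le> a" .
next
  assume h: "c * b \<le> a"
  show "c \<le> a div b"
  proof (rule ccontr)
    assume "\<not> c \<le> a div b"
    then have "a div b + 1 \<le> c" by simp
    then have "(a div b + 1) * b \<le> c * b" using b by (simp add: mult_right_mono)
    moreover have "a < (a div b + 1) * b"
      using b by (metis add.commute distrib_right div_mult_mod_eq mult_1 add_less_cancel_left pos_mod_bound)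
    ultimately show False using h by simp
  qed
qed

lemma int_div_le_iff:
  fixes a b c :: int
  assumes b: "0 < b"
  shows "a div b \<le> c \<longleftrightarrow> a < (c + 1) * b"
  using int_le_div_iff[OF b, of "c + 1" a] by linarith

definition cdiv :: "int \<Rightarrow> int \<Rightarrow> int" where
  "cdiv x m = - ((- x) div m)"

lemma cdiv_ge: "0 < m \<Longrightarrow> x \<le> cdiv x m * m"
  unfolding cdiv_def using int_le_div_iff[of m "(- x) div m" "- x"] by simp

lemma cdiv_lt: "0 < m \<Longrightarrow> (cdiv x m - 1) * m < x"
  unfolding cdiv_def using int_div_le_iff[of m "- x" "(- x) div m"] by (simp add: algebra_simps)

lemma rs_enc_cong:
  assumes "\<forall>d<K. info d = info' d"
  shows "rs_enc p K info = rs_enc p K info'"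
proof -
  have "(\<lambda>c. c \<in> rsA p K \<and> (\<forall>d<K. rsval p K c d = info d mod p)) =
        (\<lambda>c. c \<in> rsA p K \<and> (\<forall>d<K. rsval p K c d = info' d mod p))"
    using assms by auto
  then show ?thesis unfolding rs_enc_def rs_coef_def by simp
qed

lemma rcv_agreeD:
  assumes "rcv_agree n m y y'" "u \<le> m"
  shows "(y u = None) = (y' u = None)" "y u = Some a \<Longrightarrow> y' u = Some b \<Longrightarrow> i \<in> {1..n} \<Longrightarrow> a i = b i"
  using assms unfolding rcv_agree_def by auto

lemma rcv_agreeI:
  assumes "\<And>u. u \<le> m \<Longrightarrow> (y u = None) = (y' u = None)"
    and "\<And>u a b i. u \<le> m \<Longrightarrow> y u = Some a \<Longrightarrow> y' u = Some b \<Longrightarrow> i \<in> {1..n} \<Longrightarrow> a i = b i"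
  shows "rcv_agree n m y y'"
  using assms unfolding rcv_agree_def by auto

lemma rcv_agree_refl: "rcv_agree n m y y"
  by (rule rcv_agreeI) auto

lemma rcv_agree_sym: "rcv_agree n m y y' \<Longrightarrow> rcv_agree n m y' y"
  by (rule rcv_agreeI) (metis rcv_agreeD(1), metis rcv_agreeD(2))

lemma rcv_agree_trans:
  assumes h1: "rcv_agree n m y y'" and h2: "rcv_agree n m y' y''"
  shows "rcv_agree n m y y''"
proof (rule rcv_agreeI)
  fix u assume u: "u \<le> m"
  show "(y u = None) = (y'' u = None)" using rcv_agreeD(1)[OF h1 u] rcv_agreeD(1)[OF h2 u] by simp
  fix a b i assume a: "y u = Some a" and b: "y'' u = Some b" and i: "i \<in> {1..n}"
  obtain c where c: "y' u = Some c" using rcv_agreeD(1)[OF h1 u] a by auto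
  show "a i = b i" using rcv_agreeD(2)[OF h1 u a c i] rcv_agreeD(2)[OF h2 u c b i] by simp
qed

locale scode =
  fixes p n k N T1 :: nat and T :: "nat \<Rightarrow> nat"
  assumes p: "prime p" and N1: "1 \<le> N" and kn: "k < n" and NT: "N \<le> T1" and Wp: "T1 + 1 \<le> p"
    and Tj: "\<And>j. j \<in> {1..k} \<Longrightarrow> T j \<le> T1 \<and>
               int N * (int k - int j + 1) \<le> int (n - k) * (int (T j) + 1 - int N)"
begin

definition sig :: "int \<Rightarrow> int" where "sig q = q * int N div int (n - k)"
definition Q0 :: "int \<Rightarrow> int" where "Q0 u = cdiv ((u - int T1 + int N) * int (n - k)) (int N)"
definition Qp :: "int \<Rightarrow> int" where "Qp u = cdiv ((u - int T1) * int (n - k)) (int N)"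

definition info :: "(nat \<Rightarrow> nat \<Rightarrow> nat) \<Rightarrow> int \<Rightarrow> nat \<Rightarrow> nat" where
  "info s q d = (let t = sig q + int d; i = Q0 t + int k - q in
      if 0 \<le> t \<and> 1 \<le> i \<and> i \<le> int k then s (nat t) (nat i) mod p else 0)"

definition cw :: "(nat \<Rightarrow> nat \<Rightarrow> nat) \<Rightarrow> int \<Rightarrow> nat \<Rightarrow> nat" where
  "cw s q d = rs_enc p (T1 + 1 - N) (info s q) d"

definition enc :: "nat \<Rightarrow> (nat \<Rightarrow> nat \<Rightarrow> nat) \<Rightarrow> nat \<Rightarrow> nat" where
  "enc u s i = (if i \<le> k then s u i else
     (let q = Qp (int u) + int (i - k - 1) in cw s q (nat (int u - sig q))))"

definition valid :: "(nat \<Rightarrow> nat \<Rightarrow> nat) \<Rightarrow> nat set \<Rightarrow> bool" where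
  "valid s E \<longleftrightarrow> finite E \<and> card E = N \<and> (\<forall>u j'. j' \<in> {1..k} \<longrightarrow> s u j' \<in> {..<p})"

definition dec :: "nat \<Rightarrow> nat \<Rightarrow> (nat \<Rightarrow> (nat \<Rightarrow> nat) option) \<Rightarrow> nat" where
  "dec j t y = (SOME v. \<exists>s E. valid s E \<and> rcv_agree n (t + T j) (received enc s E) y \<and> v = s t j)"

lemma r_pos: "0 < int (n - k)" using kn by simp
lemma N_pos: "0 < int N" using N1 by simp

lemma sig_ge: "a \<le> sig q \<longleftrightarrow> a * int (n - k) \<le> q * int N"
  unfolding sig_def using int_le_div_iff[OF r_pos] by simp

lemma sig_le: "sig q \<le> b \<longleftrightarrow> q * int N < (b + 1) * int (n - k)"
  unfolding sig_def using int_div_le_iff[OF r_pos] by simp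

lemma Qp_bounds:
  assumes "0 \<le> e" "e < int (n - k)"
  shows "u - int T1 \<le> sig (Qp u + e)" "sig (Qp u + e) \<le> u - int T1 + int N - 1"
proof -
  have a: "(u - int T1) * int (n - k) \<le> Qp u * int N"
    unfolding Qp_def by (rule cdiv_ge[OF N_pos])
  have b: "(Qp u - 1) * int N < (u - int T1) * int (n - k)"
    unfolding Qp_def by (rule cdiv_lt[OF N_pos])
  have "Qp u * int N \<le> (Qp u + e) * int N" using assms N_pos by (simp add: mult_right_mono)
  with a show "u - int T1 \<le> sig (Qp u + e)" unfolding sig_ge by linarith
  have "(e + 1) * int N \<le> int (n - k) * int N"
    using assms N_pos by (intro mult_right_mono) auto
  then have "(Qp u + e) * int N \<le> (Qp u - 1) * int N + int (n - k) * int N"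
    by (simp add: algebra_simps)
  with b have "(Qp u + e) * int N < (u - int T1 + int N) * int (n - k)"
    by (simp add: algebra_simps)
  then show "sig (Qp u + e) \<le> u - int T1 + int N - 1" unfolding sig_le by simp
qed

lemma sym_bounds:
  assumes j: "j \<in> {1..k}"
  shows "t - int T1 + int N \<le> sig (Q0 t + int k - int j)"
    "sig (Q0 t + int k - int j) \<le> t - int T1 + int (T j)"
proof -
  have a: "(t - int T1 + int N) * int (n - k) \<le> Q0 t * int N"
    unfolding Q0_def by (rule cdiv_ge[OF N_pos])
  have b: "(Q0 t - 1) * int N < (t - int T1 + int N) * int (n - k)"
    unfolding Q0_def by (rule cdiv_lt[OF N_pos])
  have "Q0 t * int N \<le> (Q0 t + int k - int j) * int N" using j N_pos by (simp add: mult_right_mono)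
  with a show "t - int T1 + int N \<le> sig (Q0 t + int k - int j)" unfolding sig_ge by linarith
  have c: "int N * (int k - int j + 1) \<le> int (n - k) * (int (T j) + 1 - int N)" using Tj[OF j] by blast
  have "(Q0 t + int k - int j) * int N = (Q0 t - 1) * int N + int N * (int k - int j + 1)"
    by (simp add: algebra_simps)
  also have "\<dots> < (t - int T1 + int N) * int (n - k) + int (n - k) * (int (T j) + 1 - int N)"
    using b c by linarith
  also have "\<dots> = (t - int T1 + int (T j) + 1) * int (n - k)" by (simp add: algebra_simps)
  finally show "sig (Q0 t + int k - int j) \<le> t - int T1 + int (T j)" unfolding sig_le by simp
qed

lemma parity_slot:
  fixes q :: int
  assumes d1: "T1 + 1 - N \<le> d" and d2: "d \<le> T1"
  defines "t' \<equiv> sig q + int d"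
  shows "0 \<le> q - Qp t'" "q - Qp t' < int (n - k)"
proof -
  have a: "(t' - int T1) * int (n - k) \<le> Qp t' * int N"
    unfolding Qp_def by (rule cdiv_ge[OF N_pos])
  have b: "(Qp t' - 1) * int N < (t' - int T1) * int (n - k)"
    unfolding Qp_def by (rule cdiv_lt[OF N_pos])
  have "t' - int T1 \<le> sig q" using d2 unfolding t'_def by simp
  then have c: "(t' - int T1) * int (n - k) \<le> q * int N" unfolding sig_ge .
  have "(Qp t' - 1) * int N < q * int N" using b c by linarith
  then have "Qp t' - 1 < q" using N_pos by (simp add: mult_less_cancel_right)
  then show "0 \<le> q - Qp t'" by simp
  have "sig q \<le> t' - int T1 + int N - 1" using d1 NT unfolding t'_def by simp
  then have "q * int N < (t' - int T1 + int N) * int (n - k)" unfolding sig_le by simp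
  also have "\<dots> = (t' - int T1) * int (n - k) + int (n - k) * int N" by (simp add: algebra_simps)
  also have "\<dots> \<le> (Qp t' + int (n - k)) * int N" using a by (simp add: algebra_simps)
  finally have "q < Qp t' + int (n - k)" using N_pos by (simp add: mult_less_cancel_right)
  then show "q - Qp t' < int (n - k)" by simp
qed

lemma enc_causal:
  assumes ag: "msg_agree k u s s'" and i: "i \<in> {1..n}"
  shows "enc u s i = enc u s' i"
proof (cases "i \<le> k")
  case True
  then show ?thesis using ag i unfolding enc_def msg_agree_def by auto
next
  case False
  define e where "e = int (i - k - 1)"
  define q where "q = Qp (int u) + e"
  have e: "0 \<le> e" "e < int (n - k)" using False i unfolding e_def by auto
  have sq: "sig q \<le> int u - int T1 + int N - 1" using Qp_bounds(2)[OF e] unfolding q_def .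
  have "\<forall>d<T1 + 1 - N. info s q d = info s' q d"
  proof (intro allI impI)
    fix d assume d: "d < T1 + 1 - N"
    define t where "t = sig q + int d"
    have tu: "t \<le> int u" using sq d NT unfolding t_def by simp
    have "s (nat t) (nat i') = s' (nat t) (nat i')" if "0 \<le> t" "1 \<le> i'" "i' \<le> int k" for i'
    proof -
      have "nat t \<le> u" using tu that by simp
      moreover have "nat i' \<in> {1..k}" using that by auto
      ultimately show ?thesis using ag unfolding msg_agree_def by blast
    qed
    then show "info s q d = info s' q d"
      unfolding info_def Let_def t_def[symmetric] by auto
  qed
  then have "cw s q = cw s' q" unfolding cw_def by (rule rs_enc_cong)
  then show ?thesis using False unfolding enc_def Let_def e_def[symmetric] q_def[symmetric] by simp
qed

lemma unique:
  assumes v: "valid s E" "valid s' E'" and j: "j \<in> {1..k}"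
    and ag: "rcv_agree n (t + T j) (received enc s E) (received enc s' E')"
  shows "s t j = s' t j"
proof -
  have rcv: "enc u s i = enc u s' i" if "u \<le> t + T j" "u \<notin> E" "i \<in> {1..n}" for u i
  proof -
    have "u \<notin> E'" using ag that unfolding rcv_agree_def received_def by auto
    then show ?thesis using ag that unfolding rcv_agree_def received_def by auto
  qed
  have jk: "j \<le> k" using j by simp
  have sp: "s t j < p" "s' t j < p" using v j unfolding valid_def by auto
  show ?thesis
  proof (cases "t \<in> E")
    case False
    have "enc t s j = enc t s' j" using rcv[OF _ False, of j] j kn by auto
    then show ?thesis using jk unfolding enc_def by simp
  next
    case True
    define K where "K = T1 + 1 - N"
    define q where "q = Q0 (int t) + int k - int j"
    have lo: "int t - int T1 + int N \<le> sig q" using sym_bounds(1)[OF j] unfolding q_def .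
    have hi: "sig q \<le> int t - int T1 + int (T j)" using sym_bounds(2)[OF j] unfolding q_def .
    have TjT1: "T j \<le> T1" using Tj[OF j] by blast
    define d0 where "d0 = nat (int t - sig q)"
    have d0K: "d0 < K" using lo NT unfolding d0_def K_def by simp
    have d0t: "sig q + int d0 = int t" using hi TjT1 unfolding d0_def by simp
    have info0: "info s q d0 = s t j mod p" "info s' q d0 = s' t j mod p"
    proof -
      have ieq: "Q0 (int t) + int k - q = int j" unfolding q_def by simp
      show "info s q d0 = s t j mod p" "info s' q d0 = s' t j mod p"
        unfolding info_def Let_def d0t ieq using j by auto
    qed
    define S where "S = {d \<in> {..<T1 + 1}. \<not> (0 \<le> sig q + int d \<and> nat (sig q + int d) \<in> E)}"
    have finS: "finite S" unfolding S_def by simp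
    have subS: "S \<subseteq> {..<T1 + 1}" unfolding S_def by auto
    have cardS: "K \<le> card S"
    proof -
      define C where "C = {d \<in> {..<T1 + 1}. 0 \<le> sig q + int d \<and> nat (sig q + int d) \<in> E}"
      have "inj_on (\<lambda>d. nat (sig q + int d)) C" unfolding C_def by (rule inj_onI) auto
      moreover have "(\<lambda>d. nat (sig q + int d)) ` C \<subseteq> E" unfolding C_def by auto
      ultimately have "card C \<le> card E" using v(1) unfolding valid_def by (meson card_inj_on_le)
      then have cC: "card C \<le> N" using v(1) unfolding valid_def by simp
      have "S = {..<T1 + 1} - C" unfolding S_def C_def by auto
      moreover have "C \<subseteq> {..<T1 + 1}" unfolding C_def by auto
      ultimately have "card S = T1 + 1 - card C" by (simp add: card_Diff_subset finite_subset)
      then show ?thesis using cC unfolding K_def by simp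
    qed
    have eqS: "\<forall>d\<in>S. rs_enc p K (info s q) d = rs_enc p K (info s' q) d"
    proof
      fix d assume dS: "d \<in> S"
      define t' where "t' = sig q + int d"
      have dW: "d \<le> T1" using dS unfolding S_def by auto
      have t'le: "t' \<le> int (t + T j)" using hi dW unfolding t'_def by simp
      have ne: "\<not> (0 \<le> t' \<and> nat t' \<in> E)" using dS unfolding S_def t'_def by auto
      have Kp: "K \<le> p" using Wp unfolding K_def by simp
      show "rs_enc p K (info s q) d = rs_enc p K (info s' q) d"
      proof (cases "d < K")
        case True
        have "info s q d = info s' q d"
        proof -
          have "s (nat t') (nat i) = s' (nat t') (nat i)" if "0 \<le> t'" "1 \<le> i" "i \<le> int k" for i
          proof -
            have a1: "nat t' \<le> t + T j" using t'le that by linarith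
            have a2: "nat i \<in> {1..n}" using that kn by auto
            have "enc (nat t') s (nat i) = enc (nat t') s' (nat i)"
              using rcv[OF a1 _ a2] ne that by auto
            moreover have "nat i \<le> k" using that by linarith
            ultimately show ?thesis unfolding enc_def by simp
          qed
          then show ?thesis unfolding info_def Let_def t'_def[symmetric] by auto
        qed
        then show ?thesis using rs_sys[OF p Kp True] by simp
      next
        case False
        have t'pos: "0 \<le> t'" using lo False unfolding t'_def K_def by simp
        then have t'E: "nat t' \<notin> E" using ne by simp
        have e: "0 \<le> q - Qp t'" "q - Qp t' < int (n - k)"
          using parity_slot[of d q] False dW unfolding K_def t'_def by auto
        define i where "i = k + 1 + nat (q - Qp t')"
        have i: "i \<in> {1..n}" using e unfolding i_def by auto
        have "enc (nat t') s i = enc (nat t') s' i"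
          using rcv[OF _ t'E i] t'le t'pos by simp
        moreover have "int (i - k - 1) = q - Qp t'" unfolding i_def using e by simp
        moreover have "int (nat t') = t'" using t'pos by simp
        moreover have "nat (t' - sig q) = d" unfolding t'_def by simp
        ultimately have "cw s q d = cw s' q d"
          unfolding enc_def Let_def i_def by (simp add: i_def[symmetric])
        then show ?thesis unfolding cw_def K_def .
      qed
    qed
    have "info s q d0 mod p = info s' q d0 mod p"
      by (rule rs_mds[OF p Wp finS subS cardS eqS d0K])
    then show ?thesis using info0 sp by simp
  qed
qed

lemma dec_correct:
  assumes v: "valid s E" and j: "j \<in> {1..k}"
  shows "dec j t (received enc s E) = s t j"
proof -
  let ?P = "\<lambda>v. \<exists>s' E'. valid s' E' \<and> rcv_agree n (t + T j) (received enc s' E') (received enc s E) \<and> v = s' t j"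
  have "?P (s t j)"
    by (rule exI[of _ s], rule exI[of _ E]) (simp add: v rcv_agree_refl)
  then have ex: "\<exists>v. ?P v" by (rule exI[of ?P])
  define v0 where "v0 = (SOME v. ?P v)"
  have "?P v0" unfolding v0_def using someI_ex[OF ex] .
  then obtain s' E' where h: "valid s' E'" "rcv_agree n (t + T j) (received enc s' E') (received enc s E)"
    "v0 = s' t j" by (elim exE conjE)
  have "s' t j = s t j" by (rule unique[OF h(1) v j h(2)])
  moreover have "dec j t (received enc s E) = v0" unfolding dec_def v0_def ..
  ultimately show ?thesis using h(3) by simp
qed
lemma code_ok:
  "is_p2p_code {..<p} n k T enc dec \<and> achieves_spectrum {..<p} n k T N enc dec"
proof -
  have A: "\<forall>t s. (\<forall>u j. j \<in> {1..k} \<longrightarrow> s u j \<in> {..<p}) \<longrightarrow> (\<forall>i\<in>{1..n}. enc t s i \<in> {..<p})"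
  proof (intro allI impI ballI)
    fix t :: nat and s :: "nat \<Rightarrow> nat \<Rightarrow> nat" and i :: nat assume h: "\<forall>u j. j \<in> {1..k} \<longrightarrow> s u j \<in> {..<p}" and i: "i \<in> {1..n}"
    show "enc t s i \<in> {..<p}"
    proof (cases "i \<le> k")
      case True then show ?thesis using h i unfolding enc_def by auto
    next
      case False then show ?thesis unfolding enc_def Let_def cw_def using rs_lt[OF p] by simp
    qed
  qed
  have B: "\<forall>t s s'. msg_agree k t s s' \<longrightarrow> (\<forall>i\<in>{1..n}. enc t s i = enc t s' i)"
    using enc_causal by blast
  have C: "\<forall>j\<in>{1..k}. \<forall>t y y'. rcv_agree n (t + T j) y y' \<longrightarrow> dec j t y = dec j t y'"
  proof (intro ballI allI impI)
    fix j t :: nat and y y' :: "nat \<Rightarrow> (nat \<Rightarrow> nat) option"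
    assume h: "rcv_agree n (t + T j) y y'"
    have "rcv_agree n (t + T j) z y \<longleftrightarrow> rcv_agree n (t + T j) z y'" for z
    proof
      assume "rcv_agree n (t + T j) z y"
      then show "rcv_agree n (t + T j) z y'" using h by (rule rcv_agree_trans)
    next
      assume "rcv_agree n (t + T j) z y'"
      then show "rcv_agree n (t + T j) z y" using rcv_agree_sym[OF h] by (rule rcv_agree_trans)
    qed
    then show "dec j t y = dec j t y'" unfolding dec_def by simp
  qed
  have D: "achieves_spectrum {..<p} n k T N enc dec"
    unfolding achieves_spectrum_def
  proof (intro allI impI)
    fix E :: "nat set" and s :: "nat \<Rightarrow> nat \<Rightarrow> nat" and t j :: nat assume "finite E" "card E = N" "\<forall>u j'. j' \<in> {1..k} \<longrightarrow> s u j' \<in> {..<p}" "j \<in> {1..k}"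
    then have "valid s E" "j \<in> {1..k}" unfolding valid_def by auto
    then show "dec j t (received enc s E) = s t j" by (rule dec_correct)
  qed
  show ?thesis unfolding is_p2p_code_def using A B C D by (intro conjI)
qed

end


theorem corollary1:
  fixes N n k L :: nat and Tg kcon :: "nat \<Rightarrow> nat"
  assumes "N \<ge> 1" and "k \<le> n"
    and "\<And>i j. 1 \<le> i \<Longrightarrow> i < j \<Longrightarrow> j \<le> L \<Longrightarrow> Tg j < Tg i"
    and "\<And>j. j \<in> {1..L} \<Longrightarrow>
           real k \<le> real n - real n * real N *
             (1 - (\<Sum>l\<in>{1..<j}. real (kcon l) / real n)) / (real (Tg j) + 1)"
    and "k \<le> (\<Sum>l\<in>{1..L}. kcon l)"
  shows "\<exists>(R :: nat ring) (T :: nat \<Rightarrow> nat) enc dec.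
           field R \<and> finite (carrier R) \<and>
           is_p2p_code (carrier R) n k T enc dec \<and>
           achieves_spectrum (carrier R) n k T N enc dec \<and>
           (\<forall>j\<in>{1..k}. T j \<in> Tg ` {1..L}) \<and>
           (\<forall>l\<in>{1..L}. card {j\<in>{1..k}. T j = Tg l} \<le> kcon l)"
proof (cases "k = 0")
  case True
  have f2: "field (Zp 2)" by (rule Zp_field) simp
  have c2: "carrier (Zp 2) = {..<2}" by (simp add: Zp_def)
  have "is_p2p_code (carrier (Zp 2)) n k (\<lambda>_. 0) (\<lambda>_ _ _. 0) (\<lambda>_ _ _. 0)"
    unfolding is_p2p_code_def c2 using True by simp
  moreover have "achieves_spectrum (carrier (Zp 2)) n k (\<lambda>_. 0) N (\<lambda>_ _ _. 0) (\<lambda>_ _ _. 0)"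
    unfolding achieves_spectrum_def using True by simp
  ultimately show ?thesis using f2 c2 True
    by (intro exI[of _ "Zp 2"] exI[of _ "\<lambda>_. 0"] exI[of _ "\<lambda>_ _ _. 0"]) auto
next
  case False
  note N1 = assms(1) and kn0 = assms(2) and Tdec = assms(3) and H = assms(4) and ksum = assms(5)
  define Kc where "Kc l = (\<Sum>m\<in>{1..l}. kcon m)" for l
  define cl where "cl i = (LEAST l. i \<le> Kc l)" for i
  define T where "T i = Tg (cl i)" for i
  have KcL: "k \<le> Kc L" using ksum unfolding Kc_def .
  have L1: "1 \<le> L" using KcL False unfolding Kc_def by (cases L) auto
  have cl_props: "1 \<le> cl i \<and> cl i \<le> L \<and> i \<le> Kc (cl i) \<and> \<not> i \<le> Kc (cl i - 1)" if i: "i \<in> {1..k}" for i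
  proof -
    have ex: "i \<le> Kc L" using i KcL by simp
    have a: "i \<le> Kc (cl i)" unfolding cl_def using LeastI[of "\<lambda>l. i \<le> Kc l", OF ex] .
    have b: "cl i \<le> L" unfolding cl_def using Least_le[of "\<lambda>l. i \<le> Kc l", OF ex] .
    have c: "1 \<le> cl i"
    proof (rule ccontr)
      assume "\<not> 1 \<le> cl i"
      then have "cl i = 0" by simp
      then show False using a i unfolding Kc_def by simp
    qed
    have d: "\<not> i \<le> Kc (cl i - 1)"
    proof
      assume "i \<le> Kc (cl i - 1)"
      then have "cl i \<le> cl i - 1" unfolding cl_def[of i] by (rule Least_le)
      then show False using c by simp
    qed
    show ?thesis using a b c d by blast
  qed
  have Tg_le: "Tg c \<le> Tg 1" if "c \<in> {1..L}" for c
  proof (cases "c = 1")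
    case True then show ?thesis by simp
  next
    case False then show ?thesis using Tdec[of 1 c] that by fastforce
  qed
  have Tg_inj: "c = c'" if "c \<in> {1..L}" "c' \<in> {1..L}" "Tg c = Tg c'" for c c'
  proof (rule ccontr)
    assume "c \<noteq> c'"
    then have "c < c' \<or> c' < c" by arith
    then show False using Tdec[of c c'] Tdec[of c' c] that by fastforce
  qed
  have npos: "0 < n" using False kn0 by simp
  have key: "int N * (int k - int j + 1) \<le> int (n - k) * (int (Tg (cl j)) + 1 - int N)"
    if j: "j \<in> {1..k}" for j
  proof -
    define c where "c = cl j"
    have cp: "1 \<le> c" "c \<le> L" "\<not> j \<le> Kc (c - 1)" using cl_props[OF j] unfolding c_def by auto
    define Kb where "Kb = (\<Sum>l\<in>{1..<c}. kcon l)"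
    have KbKc: "Kb = Kc (c - 1)" unfolding Kb_def Kc_def using cp(1)
      by (intro sum.cong) auto
    have Kbj: "Kb + 1 \<le> j" using cp(3) KbKc by simp
    have h: "real k \<le> real n - real n * real N * (1 - real Kb / real n) / (real (Tg c) + 1)"
      using H[of c] cp unfolding Kb_def by (simp add: sum_divide_distrib)
    define x where "x = real (Tg c) + 1"
    have x0: "0 < x" unfolding x_def by simp
    have e1: "real n * real N * (1 - real Kb / real n) = real N * (real n - real Kb)"
      using npos by (simp add: field_simps)
    have "real k \<le> real n - real N * (real n - real Kb) / x" using h e1 unfolding x_def by simp
    then have "real k * x \<le> real n * x - real N * (real n - real Kb)"
      using x0 by (simp add: field_simps)
    then have r1: "real N * (real n - real Kb) \<le> (real n - real k) * x" by (simp add: algebra_simps)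
    have "real N * (real n - real j + 1) \<le> real N * (real n - real Kb)"
      using Kbj by (intro mult_left_mono) auto
    with r1 have r2: "real N * (real n - real j + 1) \<le> (real n - real k) * x" by linarith
    have "real_of_int (int N * (int k - int j + 1)) \<le> real_of_int (int (n - k) * (int (Tg c) + 1 - int N))"
      using r2 kn0 unfolding x_def by (simp add: of_nat_diff algebra_simps)
    then show ?thesis unfolding c_def by linarith
  qed
  define T1 where "T1 = Tg 1"
  have kn: "k < n" and NT: "N \<le> T1"
  proof -
    have jk: "k \<in> {1..k}" using False by simp
    have kk: "int N * (int k - int k + 1) \<le> int (n - k) * (int (Tg (cl k)) + 1 - int N)" using key[OF jk] .
    define X where "X = int (n - k) * (int (Tg (cl k)) + 1 - int N)"
    have "int N * (int k - int k + 1) = int N" by simp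
    then have "int N \<le> X" using kk unfolding X_def by linarith
    then have kk': "1 \<le> int (n - k) * (int (Tg (cl k)) + 1 - int N)" using N1 unfolding X_def by linarith
    have "0 < int (n - k)"
    proof (rule ccontr)
      assume "\<not> 0 < int (n - k)"
      then have "int (n - k) = 0" by simp
      then show False using kk' by simp
    qed
    then show "k < n" by simp
    have "0 < int (Tg (cl k)) + 1 - int N"
    proof (rule ccontr)
      assume "\<not> 0 < int (Tg (cl k)) + 1 - int N"
      then have "int (n - k) * (int (Tg (cl k)) + 1 - int N) \<le> 0"
        using \<open>0 < int (n - k)\<close> by (intro mult_nonneg_nonpos) auto
      then show False using kk' by linarith
    qed
    moreover have "Tg (cl k) \<le> T1" unfolding T1_def using Tg_le cl_props[OF jk] by auto
    ultimately show "N \<le> T1" by simp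
  qed
  obtain p where p: "prime p" "T1 + 1 < p" using bigger_prime by blast
  interpret sc: scode p n k N T1 T
  proof
    show "prime p" by (rule p(1))
    show "1 \<le> N" by (rule N1)
    show "k < n" by (rule kn)
    show "N \<le> T1" by (rule NT)
    show "T1 + 1 \<le> p" using p(2) by simp
    fix j assume j: "j \<in> {1..k}"
    show "T j \<le> T1 \<and> int N * (int k - int j + 1) \<le> int (n - k) * (int (T j) + 1 - int N)"
      unfolding T_def T1_def using key[OF j] Tg_le cl_props[OF j] by auto
  qed
  have cp: "carrier (Zp p) = {..<p}" by (simp add: Zp_def)
  have E: "\<forall>j\<in>{1..k}. T j \<in> Tg ` {1..L}" unfolding T_def using cl_props by auto
  have F: "\<forall>l\<in>{1..L}. card {j\<in>{1..k}. T j = Tg l} \<le> kcon l"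
  proof
    fix l assume l: "l \<in> {1..L}"
    have sub: "{j\<in>{1..k}. T j = Tg l} \<subseteq> {Kc (l - 1)<..Kc l}"
    proof
      fix j assume "j \<in> {j\<in>{1..k}. T j = Tg l}"
      then have j: "j \<in> {1..k}" and tj: "Tg (cl j) = Tg l" unfolding T_def by auto
      have "cl j = l" using Tg_inj[OF _ l tj] cl_props[OF j] by auto
      then show "j \<in> {Kc (l - 1)<..Kc l}" using cl_props[OF j] by auto
    qed
    obtain m where m: "l = Suc m" using l by (cases l) auto
    have "Kc l = Kc (l - 1) + kcon l" unfolding m Kc_def by (simp add: sum.cl_ivl_Suc)
    then have "card {Kc (l - 1)<..Kc l} = kcon l" by simp
    then show "card {j\<in>{1..k}. T j = Tg l} \<le> kcon l"
      using card_mono[OF _ sub] by simp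
  qed
  have G: "is_p2p_code (carrier (Zp p)) n k T sc.enc sc.dec \<and>
      achieves_spectrum (carrier (Zp p)) n k T N sc.enc sc.dec" unfolding cp by (rule sc.code_ok)
  have fin: "finite (carrier (Zp p))" unfolding cp by simp
  show ?thesis
    apply (rule exI[of _ "Zp p"], rule exI[of _ T], rule exI[of _ sc.enc], rule exI[of _ sc.dec])
    using Zp_field[OF p(1)] fin G E F by (intro conjI) simp_all
qed

end
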